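(* In the setting described in the context, let $x_*\in\mathbb{R}^n$, $\mathcal{C}_*=D^pf(x_* )$, let $P_k = I - \frac{W_k^{-1}s_ks_k^TW_k^{-T}}{s_k^TW_k^{-T}W_k^{-1}s_k}$, and define the tensor $\mathcal{E}_k\in\mathbb{R}^{\otimes^p n}$ by $(\mathcal{C}_{k+1}-\mathcal{C}_* )[W_k]^p = (\mathcal{C}_k-\mathcal{C}_* )[W_k]^p[P_k]^p + \mathcal{E}_k[W_k]^p$. Then $\|\mathcal{E}_k\|_2 \le \big(1+\kappa_2(W_k)^p\big)\|\widetilde{\mathcal{C}}_k-\mathcal{C}_*\|_2$ for every $k$.
   Context: Setting (higher-order secant update): $p\ge 2$; $f:\mathbb{R}^n\to\mathbb{R}$ is $p$ times continuously differentiable, $D^pf(x)$ denoting its $p$th derivative viewed as a symmetric multilinear map; $(x_k)_{k\ge0}$ is a sequence in $\mathbb{R}^n$ with steps $s_k = x_{k+1}-x_k \ne 0$; $(W_k)_{k\ge0}$ are nonsingular $n\times n$ matrices; $\widetilde{\mathcal{C}}_k = \int_0^1 D^pf(x_k+ts_k)\,dt$; $\mathcal{C}_0\in\mathbb{R}^{\otimes^p n}_{\mathrm{sym}}$ is arbitrary and $\mathcal{C}_{k+1}$ is the unique minimizer of $\|(\mathcal{C}-\mathcal{C}_k)[W_k]^p\|_F$ over $\mathcal{C}\in\mathbb{R}^{\otimes^p n}_{\mathrm{sym}}$ subject to $\mathcal{C}[s_k]=\widetilde{\mathcal{C}}_k[s_k]$. Notation: a $p$-tensor is a multilinear map $(\mathbb{R}^n)^p\to\mathbb{R}$;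 $\mathcal{T}[s]$ fixes the first argument to $s$; $(\mathcal{T}[M]^p)[s_1,\dots,s_p]=\mathcal{T}[Ms_1,\dots,Ms_p]$; symmetric means invariant under permutation of arguments; $\|\cdot\|_F$ is the Frobenius norm of the array of entries; $\|\mathcal{T}\|_2=\max_{\|u_i\|_2=1}|\mathcal{T}[u_1,\dots,u_p]|$; $\kappa_2(W)=\|W\|_2\|W^{-1}\|_2$. *)

theory Defs
  imports "HOL-Analysis.Analysis"
begin

text \<open>A p-tensor on R^n is represented by its array of entries, a function on
index lists; only lists of length p are meaningful.\<close>

type_synonym 'n tensor = "'n list \<Rightarrow> real"

definition idx :: "nat \<Rightarrow> 'n::finite list set" where
  "idx p = {is. length is = p}"

definition teval :: "nat \<Rightarrow> 'n::finite tensor \<Rightarrow> (real^'n) list \<Rightarrow> real" where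
  "teval p T us = (\<Sum>is\<in>idx p. T is * (\<Prod>k<p. (us ! k) $ (is ! k)))"

definition tfirst :: "real^'n::finite \<Rightarrow> 'n tensor \<Rightarrow> 'n tensor" where
  "tfirst s T = (\<lambda>is. \<Sum>i\<in>UNIV. s $ i * T (i # is))"

text \<open>T[M]^p, i.e. (T[M]^p)[s_1,...,s_p] = T[M s_1,...,M s_p].\<close>
definition tmul :: "nat \<Rightarrow> 'n::finite tensor \<Rightarrow> real^'n^'n \<Rightarrow> 'n tensor" where
  "tmul p T M = (\<lambda>js. \<Sum>is\<in>idx p. T is * (\<Prod>k<p. M $ (is ! k) $ (js ! k)))"

definition sym_tensor :: "nat \<Rightarrow> 'n::finite tensor \<Rightarrow> bool" where
  "sym_tensor p T \<longleftrightarrow> (\<forall>is. length is \<noteq> p \<longrightarrow> T is = 0) \<and>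
     (\<forall>is js. length is = p \<longrightarrow> mset js = mset is \<longrightarrow> T js = T is)"

definition frob :: "nat \<Rightarrow> 'n::finite tensor \<Rightarrow> real" where
  "frob p T = sqrt (\<Sum>is\<in>idx p. (T is)\<^sup>2)"

definition tnorm2 :: "nat \<Rightarrow> 'n::finite tensor \<Rightarrow> real" where
  "tnorm2 p T = Sup {\<bar>teval p T us\<bar> | us. length us = p \<and> (\<forall>u\<in>set us. norm u = 1)}"

definition kappa2 :: "real^'n^'n::finite \<Rightarrow> real" where
  "kappa2 W = onorm (\<lambda>x. W *v x) * onorm (\<lambda>x. matrix_inv W *v x)"

text \<open>Iterated partial derivatives: pder k f x [i_1,...,i_k] = d_{i_1} ... d_{i_k} f (x),
 i.e. the entries of D^k f(x).\<close>
fun pder :: "nat \<Rightarrow> (real^'n::finite \<Rightarrow> real) \<Rightarrow> real^'n \<Rightarrow> 'n list \<Rightarrow> real" where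
  "pder 0 f x is = f x"
| "pder (Suc k) f x [] = 0"
| "pder (Suc k) f x (i # is) = frechet_derivative (\<lambda>y. pder k f y is) (at x) (axis i 1)"

definition Cp :: "nat \<Rightarrow> (real^'n::finite \<Rightarrow> real) \<Rightarrow> bool" where
  "Cp p f \<longleftrightarrow> (\<forall>k<p. \<forall>is. length is = k \<longrightarrow> (\<forall>x. (\<lambda>y. pder k f y is) differentiable (at x))) \<and>
               (\<forall>k\<le>p. \<forall>is. length is = k \<longrightarrow> continuous_on UNIV (\<lambda>y. pder k f y is))"

text \<open>Averaged p-th derivative along the step: int_0^1 D^p f(x + t s) dt.\<close>
definition avgD :: "nat \<Rightarrow> (real^'n::finite \<Rightarrow> real) \<Rightarrow> real^'n \<Rightarrow> real^'n \<Rightarrow> 'n tensor" where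
  "avgD p f x s = (\<lambda>is. integral {0..1} (\<lambda>t::real. pder p f (x + t *\<^sub>R s) is))"

definition feasible :: "nat \<Rightarrow> real^'n::finite \<Rightarrow> 'n tensor \<Rightarrow> 'n tensor set" where
  "feasible p s Ct = {C. sym_tensor p C \<and> (\<forall>is. length is = p - 1 \<longrightarrow> tfirst s C is = tfirst s Ct is)}"

definition projP :: "real^'n^'n::finite \<Rightarrow> real^'n \<Rightarrow> real^'n^'n" where
  "projP W s = (let v = matrix_inv W *v s in
      mat 1 - (\<chi> i j. v $ i * v $ j / (v \<bullet> v)))"

end

theory Submission
  imports Defs "HOL-Combinatorics.Permutations"
begin


lemma finite_idx[simp]: "finite (idx p :: 'n::finite list set)"
  unfolding idx_def using finite_lists_length_eq[of "UNIV::'n set" p] by simp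

lemma idx_Suc: "idx (Suc p) = (\<lambda>(i,is). i # is) ` (UNIV \<times> (idx p :: 'n::finite list set))"
  unfolding idx_def by (auto simp: length_Suc_conv image_iff)

lemma sum_idx_Suc: "(\<Sum>is\<in>idx (Suc p). F is) = (\<Sum>i\<in>(UNIV::'n::finite set). \<Sum>is\<in>idx p. F (i # is))"
proof -
  have inj: "inj_on (\<lambda>(i,is). i # is) (UNIV \<times> (idx p :: 'n list set))" by (auto simp: inj_on_def)
  have "(\<Sum>is\<in>idx (Suc p). F is) = (\<Sum>x\<in>UNIV \<times> idx p. F ((\<lambda>(i,is). i # is) x))"
    unfolding idx_Suc by (rule sum.reindex[OF inj, unfolded comp_def])
  also have "\<dots> = (\<Sum>i\<in>(UNIV::'n::finite set). \<Sum>is\<in>idx p. F (i # is))"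
    by (simp add: sum.cartesian_product split_def)
  finally show ?thesis .
qed

lemma sum_prod_idx: "(\<Sum>is\<in>idx p. \<Prod>k<p. (g::nat\<Rightarrow>'n::finite\<Rightarrow>real) k (is ! k)) = (\<Prod>k<p. \<Sum>i\<in>(UNIV::'n::finite set). g k i)"
proof (induction p arbitrary: g)
  case 0 then show ?case by (simp add: idx_def)
next
  case (Suc p)
  have "(\<Sum>is\<in>idx (Suc p). \<Prod>k<Suc p. g k (is ! k)) = (\<Sum>i\<in>(UNIV::'n set). \<Sum>is\<in>idx p. g 0 i * (\<Prod>k<p. g (Suc k) (is ! k)))"
    unfolding sum_idx_Suc prod.lessThan_Suc_shift by simp
  also have "\<dots> = (\<Sum>i\<in>(UNIV::'n set). g 0 i) * (\<Prod>k<p. \<Sum>i\<in>(UNIV::'n set). g (Suc k) i)"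
  proof -
    have "\<And>i. (\<Sum>is\<in>idx p. g 0 i * (\<Prod>k<p. g (Suc k) (is ! k))) = g 0 i * (\<Prod>k<p. \<Sum>i\<in>(UNIV::'n set). g (Suc k) i)"
      by (metis (no_types) sum_distrib_left Suc.IH[of "\<lambda>k. g (Suc k)"])
    then show ?thesis by (simp add: sum_distrib_right)
  qed
  also have "\<dots> = (\<Prod>k<Suc p. \<Sum>i\<in>(UNIV::'n::finite set). g k i)"
    unfolding prod.lessThan_Suc_shift by simp
  finally show ?case .
qed

lemma tmul_cong: "(\<And>is. is \<in> idx p \<Longrightarrow> T is = T' is) \<Longrightarrow> tmul p T M = tmul p T' M"
  unfolding tmul_def by (intro ext sum.cong) auto

lemma teval_cong: "(\<And>is. is \<in> idx p \<Longrightarrow> T is = T' is) \<Longrightarrow> teval p T us = teval p T' us"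
  unfolding teval_def by (intro sum.cong) auto

lemma tmul_diff: "tmul p (\<lambda>is. A is - B is) M js = tmul p A M js - tmul p B M js"
  unfolding tmul_def by (simp add: sum_subtractf algebra_simps)

lemma tmul_add: "tmul p (\<lambda>is. A is + B is) M js = tmul p A M js + tmul p B M js"
  unfolding tmul_def by (simp add: sum.distrib algebra_simps)

lemma teval_diff: "teval p (\<lambda>is. A is - B is) us = teval p A us - teval p B us"
  unfolding teval_def by (simp add: sum_subtractf algebra_simps)

lemma tmul_comp: "tmul p (tmul p T M) N js = tmul p T (M ** N) js"
proof -
  have "tmul p (tmul p T M) N js = (\<Sum>is\<in>idx p. \<Sum>ls\<in>idx p. T ls * ((\<Prod>k<p. M $ (ls ! k) $ (is ! k)) * (\<Prod>k<p. N $ (is ! k) $ (js ! k))))"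
    unfolding tmul_def by (simp add: sum_distrib_right mult.assoc)
  also have "\<dots> = (\<Sum>ls\<in>idx p. T ls * (\<Sum>is\<in>idx p. \<Prod>k<p. M $ (ls ! k) $ (is ! k) * N $ (is ! k) $ (js ! k)))"
    by (subst sum.swap) (simp add: sum_distrib_left prod.distrib)
  also have "\<dots> = (\<Sum>ls\<in>idx p. T ls * (\<Prod>k<p. \<Sum>i\<in>UNIV. M $ (ls ! k) $ i * N $ i $ (js ! k)))"
    by (simp add: sum_prod_idx[where g="\<lambda>k i. M $ (_ ! k) $ i * N $ i $ (js ! k)"])
  also have "\<dots> = tmul p T (M ** N) js"
    unfolding tmul_def by (simp add: matrix_matrix_mult_def)
  finally show ?thesis .
qed

lemma prod_delta: "length is = p \<Longrightarrow> length js = p \<Longrightarrow>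
   (\<Prod>k<p. (if is ! k = js ! k then 1 else 0::real)) = (if is = js then 1 else 0)"
proof (cases "is = js")
  case True then show ?thesis by simp
next
  case False
  assume l: "length is = p" "length js = p"
  with False obtain k where "k < p" "is ! k \<noteq> js ! k" by (metis nth_equalityI)
  then have "(\<Prod>k<p. (if is ! k = js ! k then 1 else 0::real)) = 0"
    by (intro prod_zero) (auto intro!: bexI[of _ k])
  then show ?thesis using False by simp
qed

lemma tmul_id: "length js = p \<Longrightarrow> tmul p T (mat 1) js = T js"
proof -
  assume l: "length js = p"
  have "tmul p T (mat 1) js = (\<Sum>is\<in>idx p. T is * (if is = js then 1 else 0))"
    unfolding tmul_def by (intro sum.cong refl) (simp add: mat_def prod_delta[OF _ l] idx_def)
  also have "\<dots> = (\<Sum>is\<in>idx p. if is = js then T js else 0)" by (intro sum.cong) auto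
  also have "\<dots> = T js" using l by (simp add: sum.delta) (simp add: idx_def)
  finally show ?thesis .
qed

lemma teval_tmul: "length us = p \<Longrightarrow> teval p (tmul p T M) us = teval p T (map (\<lambda>u. M *v u) us)"
proof -
  assume l: "length us = p"
  have "teval p (tmul p T M) us = (\<Sum>js\<in>idx p. \<Sum>is\<in>idx p. T is * ((\<Prod>k<p. M $ (is ! k) $ (js ! k)) * (\<Prod>k<p. (us ! k) $ (js ! k))))"
    unfolding teval_def tmul_def by (simp add: sum_distrib_right mult.assoc)
  also have "\<dots> = (\<Sum>is\<in>idx p. T is * (\<Sum>js\<in>idx p. \<Prod>k<p. M $ (is ! k) $ (js ! k) * (us ! k) $ (js ! k)))"
    by (subst sum.swap) (simp add: sum_distrib_left prod.distrib)
  also have "\<dots> = (\<Sum>is\<in>idx p. T is * (\<Prod>k<p. \<Sum>i\<in>UNIV. M $ (is ! k) $ i * (us ! k) $ i))"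
    by (simp add: sum_prod_idx[where g="\<lambda>k i. M $ (_ ! k) $ i * (us ! k) $ i"])
  also have "\<dots> = teval p T (map (\<lambda>u. M *v u) us)"
    unfolding teval_def using l by (intro sum.cong refl arg_cong2[where f="(*)"] prod.cong) (auto simp: matrix_vector_mult_def)
  finally show ?thesis .
qed

lemma tmul_adj: "(\<Sum>js\<in>idx p. tmul p T M js * S js) = (\<Sum>is\<in>idx p. T is * tmul p S (transpose M) is)"
  unfolding tmul_def
  by (simp add: sum_distrib_right sum_distrib_left transpose_def mult_ac) (rule sum.swap)

lemma tfirst_tmul: "tfirst u (tmul (Suc q) T M) js = tmul q (tfirst (M *v u) T) M js"
proof -
  have "tfirst u (tmul (Suc q) T M) js = (\<Sum>i\<in>UNIV. u $ i * (\<Sum>i0\<in>UNIV. \<Sum>is\<in>idx q. T (i0 # is) * (M $ i0 $ i * (\<Prod>k<q. M $ (is ! k) $ (js ! k)))))"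
    unfolding tfirst_def tmul_def sum_idx_Suc prod.lessThan_Suc_shift by simp
  also have "\<dots> = (\<Sum>is\<in>idx q. (\<Sum>i0\<in>UNIV. (\<Sum>i\<in>UNIV. M $ i0 $ i * u $ i) * T (i0 # is)) * (\<Prod>k<q. M $ (is ! k) $ (js ! k)))"
    apply (simp add: sum_distrib_left sum_distrib_right mult_ac)
    apply (rule trans)
     apply (rule sum.cong[OF refl])
     apply (rule sum.swap[where A=UNIV and B="idx q"])
    apply (rule trans[OF sum.swap[where A=UNIV and B="idx q"]])
    apply (rule sum.cong[OF refl])
    apply (rule sum.swap)
    done
  also have "\<dots> = tmul q (tfirst (M *v u) T) M js"
    unfolding tmul_def tfirst_def by (simp add: matrix_vector_mult_def)
  finally show ?thesis .
qed



definition sym_on :: "nat \<Rightarrow> 'n::finite tensor \<Rightarrow> bool" where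
  "sym_on p T \<longleftrightarrow> (\<forall>is js. length is = p \<longrightarrow> mset js = mset is \<longrightarrow> T js = T is)"

lemma perm_sum:
  fixes T :: "'n::finite tensor"
  assumes sym: "sym_on p T" and tau: "\<tau> permutes {..<p}"
  shows "(\<Sum>is\<in>idx p. T is * (\<Prod>k<p. F k (is ! k))) = (\<Sum>is\<in>idx p. T is * (\<Prod>k<p. F (inv \<tau> k) (is ! k)))"
proof -
  have itau: "inv \<tau> permutes {..<p}" using permutes_inv[OF tau] .
  have tl: "\<And>k. k < p \<Longrightarrow> \<tau> k < p" "\<And>k. k < p \<Longrightarrow> inv \<tau> k < p"
    using permutes_in_image[OF tau] permutes_in_image[OF itau] by auto
  have step1: "(\<Sum>is\<in>idx p. T is * (\<Prod>k<p. F k (is ! k))) = (\<Sum>b\<in>idx p. T b * (\<Prod>k<p. F k (b ! \<tau> k)))"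
  proof (rule sum.reindex_bij_witness[where i="permute_list \<tau>" and j="permute_list (inv \<tau>)"])
    fix a :: "'n list" assume a: "a \<in> idx p"
    then have la: "length a = p" by (simp add: idx_def)
    show "permute_list \<tau> (permute_list (inv \<tau>) a) = a"
    proof (rule nth_equalityI)
      show "length (permute_list \<tau> (permute_list (inv \<tau>) a)) = length a" by simp
      fix i assume "i < length (permute_list \<tau> (permute_list (inv \<tau>) a))"
      then have i: "i < p" using la by simp
      have "permute_list \<tau> (permute_list (inv \<tau>) a) ! i = permute_list (inv \<tau>) a ! (\<tau> i)"
        using i la tau by (simp add: permute_list_nth)
      also have "\<dots> = a ! (inv \<tau> (\<tau> i))" using tl(1)[OF i] la itau by (simp add: permute_list_nth)
      also have "\<dots> = a ! i" by (simp add: permutes_inverses[OF tau])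
      finally show "permute_list \<tau> (permute_list (inv \<tau>) a) ! i = a ! i" .
    qed
    show "permute_list (inv \<tau>) a \<in> idx p" using la by (simp add: idx_def)
    show "permute_list \<tau> a \<in> idx p" using la by (simp add: idx_def)
    show "permute_list (inv \<tau>) (permute_list \<tau> a) = a"
    proof (rule nth_equalityI)
      show "length (permute_list (inv \<tau>) (permute_list \<tau> a)) = length a" by simp
      fix i assume "i < length (permute_list (inv \<tau>) (permute_list \<tau> a))"
      then have i: "i < p" using la by simp
      have "permute_list (inv \<tau>) (permute_list \<tau> a) ! i = permute_list \<tau> a ! (inv \<tau> i)"
        using i la itau by (simp add: permute_list_nth)
      also have "\<dots> = a ! (\<tau> (inv \<tau> i))" using tl(2)[OF i] la tau by (simp add: permute_list_nth)
      also have "\<dots> = a ! i" by (simp add: permutes_inverses[OF tau])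
      finally show "permute_list (inv \<tau>) (permute_list \<tau> a) ! i = a ! i" .
    qed
    have "mset (permute_list (inv \<tau>) a) = mset a"
      using itau la by (simp add: mset_permute_list)
    then have "T (permute_list (inv \<tau>) a) = T a"
      using sym la unfolding sym_on_def by blast
    moreover have "(\<Prod>k<p. F k (permute_list (inv \<tau>) a ! \<tau> k)) = (\<Prod>k<p. F k (a ! k))"
    proof (rule prod.cong[OF refl])
      fix k assume "k \<in> {..<p}"
      then have k: "k < p" by simp
      have "permute_list (inv \<tau>) a ! \<tau> k = a ! (inv \<tau> (\<tau> k))" using tl(1)[OF k] la itau by (simp add: permute_list_nth)
      then show "F k (permute_list (inv \<tau>) a ! \<tau> k) = F k (a ! k)" by (simp add: permutes_inverses[OF tau])
    qed
    ultimately show "T (permute_list (inv \<tau>) a) * (\<Prod>k<p. F k (permute_list (inv \<tau>) a ! \<tau> k)) = T a * (\<Prod>k<p. F k (a ! k))"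
      by simp
  qed
  have step2: "(\<Prod>k<p. F k (b ! \<tau> k)) = (\<Prod>k<p. F (inv \<tau> k) (b ! k))" for b :: "'n list"
    by (rule prod.reindex_bij_witness[where i="inv \<tau>" and j="\<tau>"])
       (auto simp: permutes_inverses[OF tau] tl)
  show ?thesis unfolding step1 step2 ..
qed

lemma tmul_sym: "sym_on p T \<Longrightarrow> sym_on p (tmul p T M)"
  unfolding sym_on_def[of p "tmul p T M"]
proof (intro allI impI)
  fix js js' :: "'a list"
  assume sym: "sym_on p T" and l: "length js = p" and m: "mset js' = mset js"
  obtain \<tau> where tau: "\<tau> permutes {..<length js}" and pl: "permute_list \<tau> js = js'"
    using mset_eq_permutation[OF m] by blast
  have "tmul p T M js' = (\<Sum>is\<in>idx p. T is * (\<Prod>k<p. M $ (is ! k) $ (js ! \<tau> k)))"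
    unfolding tmul_def pl[symmetric] using l tau by (intro sum.cong refl arg_cong2[where f="(*)"] prod.cong) (auto simp: permute_list_nth)
  also have "\<dots> = (\<Sum>is\<in>idx p. T is * (\<Prod>k<p. M $ (is ! k) $ (js ! \<tau> (inv \<tau> k))))"
    using perm_sum[OF sym, of \<tau> "\<lambda>k i. M $ i $ (js ! \<tau> k)"] tau l by simp
  also have "\<dots> = tmul p T M js"
    unfolding tmul_def by (simp add: permutes_inverses[OF tau])
  finally show "tmul p T M js' = tmul p T M js" .
qed

lemma contract_zero:
  fixes A :: "'n::finite tensor"
  assumes sym: "sym_on (Suc q) A" and tf: "\<And>rest. rest \<in> idx q \<Longrightarrow> tfirst v A rest = 0"
    and m: "m < Suc q" and Fm: "\<And>i. F m i = c * v $ i"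
  shows "(\<Sum>is\<in>idx (Suc q). A is * (\<Prod>k<Suc q. F k (is ! k))) = 0"
proof -
  let ?t = "Transposition.transpose 0 m"
  have tp: "?t permutes {..<Suc q}" using m by (intro permutes_swap_id) auto
  have "(\<Sum>is\<in>idx (Suc q). A is * (\<Prod>k<Suc q. F k (is ! k))) = (\<Sum>is\<in>idx (Suc q). A is * (\<Prod>k<Suc q. F (?t k) (is ! k)))"
    using perm_sum[OF sym tp, of F] by simp
  also have "\<dots> = (\<Sum>i\<in>UNIV. \<Sum>rest\<in>idx q. A (i # rest) * (F m i * (\<Prod>k<q. F (?t (Suc k)) (rest ! k))))"
    unfolding sum_idx_Suc prod.lessThan_Suc_shift by simp
  also have "\<dots> = (\<Sum>rest\<in>idx q. c * (\<Prod>k<q. F (?t (Suc k)) (rest ! k)) * tfirst v A rest)"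
    unfolding tfirst_def Fm
    by (subst sum.swap) (simp add: sum_distrib_left sum_distrib_right mult_ac)
  also have "\<dots> = 0" using tf by simp
  finally show ?thesis .
qed

definition Pm :: "real^'n::finite \<Rightarrow> real^'n^'n" where
  "Pm v = mat 1 - (\<chi> i j. v $ i * v $ j / (v \<bullet> v))"

lemma Pm_entry: "Pm v $ i $ j = - (v $ i * v $ j / (v \<bullet> v)) + (if i = j then 1 else 0)"
  by (simp add: Pm_def mat_def)

lemma tmulP_fix:
  fixes Y :: "'n::finite tensor"
  assumes sym: "sym_on (Suc q) Y" and tf: "\<And>rest. rest \<in> idx q \<Longrightarrow> tfirst v Y rest = 0"
    and l: "length js = Suc q"
  shows "tmul (Suc q) Y (Pm v) js = Y js"
proof -
  let ?K = "{..<Suc q}"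
  define f1 where "f1 is k = - (v $ (is ! k) * v $ (js ! k) / (v \<bullet> v))" for "is" :: "'n list" and k
  define f2 where "f2 is k = (if is ! k = js ! k then 1 else 0::real)" for "is" :: "'n list" and k
  define g where "g X = (\<Sum>is\<in>idx (Suc q). Y is * ((\<Prod>k\<in>X. f1 is k) * (\<Prod>k\<in>?K - X. f2 is k)))" for X
  have "tmul (Suc q) Y (Pm v) js = (\<Sum>is\<in>idx (Suc q). Y is * (\<Prod>k\<in>?K. f1 is k + f2 is k))"
    unfolding tmul_def Pm_entry f1_def f2_def by simp
  also have "\<dots> = (\<Sum>is\<in>idx (Suc q). \<Sum>X\<in>Pow ?K. Y is * ((\<Prod>k\<in>X. f1 is k) * (\<Prod>k\<in>?K - X. f2 is k)))"
    by (intro sum.cong refl) (simp only: prod_add[OF finite_lessThan] sum_distrib_left)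
  also have "\<dots> = (\<Sum>X\<in>Pow ?K. g X)" unfolding g_def by (rule sum.swap)
  also have "\<dots> = g {} + (\<Sum>X\<in>Pow ?K - {{}}. g X)" by (rule sum.remove) auto
  also have "(\<Sum>X\<in>Pow ?K - {{}}. g X) = 0"
  proof (rule sum.neutral, rule ballI)
    fix X assume X: "X \<in> Pow ?K - {{}}"
    then obtain m where mX: "m \<in> X" by auto
    with X have m: "m < Suc q" by auto
    define F where "F k i = (if k \<in> X then - (v $ i * v $ (js ! k) / (v \<bullet> v)) else (if i = js ! k then 1 else 0::real))" for k i
    have "g X = (\<Sum>is\<in>idx (Suc q). Y is * (\<Prod>k<Suc q. F k (is ! k)))"
      unfolding g_def
    proof (intro sum.cong refl arg_cong2[where f="(*)"])
      fix "is" :: "'n list"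
      have "(\<Prod>k<Suc q. F k (is ! k)) = (\<Prod>k\<in>?K \<inter> {k. k \<in> X}. f1 is k) * (\<Prod>k\<in>?K \<inter> - {k. k \<in> X}. f2 is k)"
        unfolding F_def f1_def f2_def by (rule prod.If_cases) simp
      also have "?K \<inter> {k. k \<in> X} = X" using X by auto
      also have "?K \<inter> - {k. k \<in> X} = ?K - X" by auto
      finally show "(\<Prod>k\<in>X. f1 is k) * (\<Prod>k\<in>?K - X. f2 is k) = (\<Prod>k<Suc q. F k (is ! k))" by simp
    qed
    also have "\<dots> = 0"
      by (rule contract_zero[OF sym tf m, of F "- (v $ (js ! m)) / (v \<bullet> v)"]) (auto simp: F_def mX)
    finally show "g X = 0" .
  qed
  also have "g {} = tmul (Suc q) Y (mat 1) js"
    unfolding g_def tmul_def f2_def by (simp add: mat_def)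
  also have "\<dots> = Y js" using l by (rule tmul_id)
  finally show ?thesis by simp
qed



definition dpart :: "'n::finite \<Rightarrow> (real^'n \<Rightarrow> real) \<Rightarrow> real^'n \<Rightarrow> real" where
  "dpart a g y = frechet_derivative g (at y) (axis a 1)"

lemma line_deriv:
  fixes g :: "real^'n::finite \<Rightarrow> real"
  assumes dg: "g differentiable (at (y + t *\<^sub>R u))"
  shows "((\<lambda>t. g (y + t *\<^sub>R u)) has_real_derivative frechet_derivative g (at (y + t *\<^sub>R u)) u) (at t)"
proof -
  let ?g' = "frechet_derivative g (at (y + t *\<^sub>R u))"
  have G: "(g has_derivative ?g') (at (y + t *\<^sub>R u))" using dg frechet_derivative_works by blast
  have L: "((\<lambda>t. y + t *\<^sub>R u) has_derivative (\<lambda>h. h *\<^sub>R u)) (at t)"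
    by (auto intro!: derivative_eq_intros)
  have "((g \<circ> (\<lambda>t. y + t *\<^sub>R u)) has_derivative (?g' \<circ> (\<lambda>h. h *\<^sub>R u))) (at t)"
    using diff_chain_at[OF L G] .
  moreover have "?g' \<circ> (\<lambda>h. h *\<^sub>R u) = (*) (?g' u)"
    using linear_scale[OF has_derivative_linear[OF G]] by (auto simp: fun_eq_iff mult.commute)
  ultimately have "((g \<circ> (\<lambda>t. y + t *\<^sub>R u)) has_derivative (*) (?g' u)) (at t)" by simp
  then show ?thesis unfolding has_field_derivative_def by (simp add: o_def)
qed

lemma mixed_mvt:
  fixes g :: "real^'n::finite \<Rightarrow> real"
  assumes dg: "\<And>z. g differentiable (at z)" and da: "\<And>z. dpart a g differentiable (at z)"
    and h: "h > 0"
  shows "\<exists>\<xi>. norm (\<xi> - x) < 2 * h \<and>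
    g (x + h *\<^sub>R axis a 1 + h *\<^sub>R axis b 1) - g (x + h *\<^sub>R axis a 1) - g (x + h *\<^sub>R axis b 1) + g x
      = h * h * dpart b (dpart a g) \<xi>"
proof -
  let ?ea = "axis a 1 :: real^'n" and ?eb = "axis b 1 :: real^'n"
  define \<phi> where "\<phi> t = g ((x + h *\<^sub>R ?eb) + t *\<^sub>R ?ea) - g (x + t *\<^sub>R ?ea)" for t
  have "\<exists>z. 0 < z \<and> z < h \<and> \<phi> h - \<phi> 0 = (h - 0) *
      (dpart a g ((x + h *\<^sub>R ?eb) + z *\<^sub>R ?ea) - dpart a g (x + z *\<^sub>R ?ea))"
    unfolding \<phi>_def dpart_def
    by (rule MVT2[OF h]) (intro DERIV_diff line_deriv dg)
  then obtain t1 where t1: "0 < t1" "t1 < h" and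
    e1: "\<phi> h - \<phi> 0 = h * (dpart a g ((x + t1 *\<^sub>R ?ea) + h *\<^sub>R ?eb) - dpart a g ((x + t1 *\<^sub>R ?ea) + 0 *\<^sub>R ?eb))"
    by (auto simp: algebra_simps)
  have "\<exists>z. 0 < z \<and> z < h \<and> dpart a g ((x + t1 *\<^sub>R ?ea) + h *\<^sub>R ?eb) - dpart a g ((x + t1 *\<^sub>R ?ea) + 0 *\<^sub>R ?eb)
      = (h - 0) * dpart b (dpart a g) ((x + t1 *\<^sub>R ?ea) + z *\<^sub>R ?eb)"
    unfolding dpart_def[of b]
    by (rule MVT2[OF h]) (intro line_deriv da)
  then obtain s1 where s1: "0 < s1" "s1 < h" and
    e2: "dpart a g ((x + t1 *\<^sub>R ?ea) + h *\<^sub>R ?eb) - dpart a g ((x + t1 *\<^sub>R ?ea) + 0 *\<^sub>R ?eb)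
      = h * dpart b (dpart a g) ((x + t1 *\<^sub>R ?ea) + s1 *\<^sub>R ?eb)" by auto
  have "norm (t1 *\<^sub>R ?ea + s1 *\<^sub>R ?eb) \<le> t1 + s1"
    using norm_triangle_ineq[of "t1 *\<^sub>R ?ea" "s1 *\<^sub>R ?eb"] t1 s1 by simp
  then have "norm ((x + t1 *\<^sub>R ?ea + s1 *\<^sub>R ?eb) - x) < 2 * h" using t1 s1 by (simp add: algebra_simps)
  note n = this
  have "g (x + h *\<^sub>R ?ea + h *\<^sub>R ?eb) - g (x + h *\<^sub>R ?ea) - g (x + h *\<^sub>R ?eb) + g x = \<phi> h - \<phi> 0"
    unfolding \<phi>_def by (simp add: algebra_simps)
  also have "\<dots> = h * h * dpart b (dpart a g) ((x + t1 *\<^sub>R ?ea) + s1 *\<^sub>R ?eb)"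
    using e1 e2 by simp
  finally show ?thesis using n by blast
qed

lemma schwarz:
  fixes g :: "real^'n::finite \<Rightarrow> real"
  assumes dg: "\<And>z. g differentiable (at z)"
    and da: "\<And>z. dpart a g differentiable (at z)" and db: "\<And>z. dpart b g differentiable (at z)"
    and cab: "continuous_on UNIV (dpart b (dpart a g))" and cba: "continuous_on UNIV (dpart a (dpart b g))"
  shows "dpart b (dpart a g) x = dpart a (dpart b g) x"
proof (rule ccontr)
  let ?F = "dpart b (dpart a g)" and ?G = "dpart a (dpart b g)"
  assume ne: "?F x \<noteq> ?G x"
  define e where "e = \<bar>?F x - ?G x\<bar> / 2"
  have e: "e > 0" using ne by (simp add: e_def)
  have cF: "isCont ?F x" and cG: "isCont ?G x"
    using cab cba continuous_on_eq_continuous_at[of UNIV] by auto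
  obtain d1 where d1: "d1 > 0" "\<And>y. dist y x < d1 \<Longrightarrow> dist (?F y) (?F x) < e"
    using cF e unfolding continuous_at_eps_delta by blast
  obtain d2 where d2: "d2 > 0" "\<And>y. dist y x < d2 \<Longrightarrow> dist (?G y) (?G x) < e"
    using cG e unfolding continuous_at_eps_delta by blast
  define h where "h = min d1 d2 / 2"
  have h: "h > 0" using d1 d2 by (simp add: h_def)
  obtain \<xi> where \<xi>: "norm (\<xi> - x) < 2 * h"
    "g (x + h *\<^sub>R axis a 1 + h *\<^sub>R axis b 1) - g (x + h *\<^sub>R axis a 1) - g (x + h *\<^sub>R axis b 1) + g x
      = h * h * ?F \<xi>"
    using mixed_mvt[OF dg da h] by blast
  obtain \<eta> where \<eta>: "norm (\<eta> - x) < 2 * h"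
    "g (x + h *\<^sub>R axis b 1 + h *\<^sub>R axis a 1) - g (x + h *\<^sub>R axis b 1) - g (x + h *\<^sub>R axis a 1) + g x
      = h * h * ?G \<eta>"
    using mixed_mvt[OF dg db h] by blast
  have "h * h * ?F \<xi> = h * h * ?G \<eta>" using \<xi>(2) \<eta>(2) by (simp add: algebra_simps)
  then have eq: "?F \<xi> = ?G \<eta>" using h by simp
  have "dist \<xi> x < d1" "dist \<eta> x < d2" using \<xi>(1) \<eta>(1) by (auto simp: dist_norm h_def)
  then have "dist (?F \<xi>) (?F x) < e" "dist (?G \<eta>) (?G x) < e" using d1 d2 by auto
  then have "\<bar>?F x - ?G x\<bar> < 2 * e" using eq by (simp add: dist_real_def)
  then show False by (simp add: e_def)
qed

lemma dpart_pder: "dpart i (\<lambda>y. pder k f y is) = (\<lambda>y. pder (Suc k) f y (i # is))"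
  by (simp add: dpart_def fun_eq_iff)

lemma pder_sym:
  assumes Cp: "Cp p f"
  shows "m \<le> p \<Longrightarrow> length is = m \<Longrightarrow> mset js = mset is \<Longrightarrow> pder m f x js = pder m f x is"
proof (induction m arbitrary: "is" js x)
  case 0
  then show ?case by simp
next
  case (Suc m)
  have dif: "\<And>k r z. k < p \<Longrightarrow> length r = k \<Longrightarrow> (\<lambda>y. pder k f y r) differentiable (at z)"
    and con: "\<And>k r. k \<le> p \<Longrightarrow> length r = k \<Longrightarrow> continuous_on UNIV (\<lambda>y. pder k f y r)"
    using Cp unfolding Cp_def by auto
  from Suc.prems obtain i is' where isd: "is = i # is'" and lis': "length is' = m"
    by (cases "is") auto
  from Suc.prems have "length js = Suc m" using mset_eq_length by fastforce
  then obtain j js' where jsd: "js = j # js'" by (cases js) auto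
  show ?case
  proof (cases "i = j")
    case True
    then have "mset js' = mset is'" using Suc.prems isd jsd by simp
    then have "\<And>y. pder m f y js' = pder m f y is'" using Suc.IH[of is' js'] Suc.prems lis' by simp
    then show ?thesis using isd jsd True by simp
  next
    case False
    have "j \<in># mset is" using Suc.prems(3) jsd by (metis list.set_intros(1) set_mset_mset)
    then have jis': "j \<in> set is'" using False isd by simp
    define r where "r = remove1 j is'"
    have m1: "mset is' = mset (j # r)" using jis' by (simp add: r_def)
    have "add_mset j (mset js') = add_mset i (add_mset j (mset r))"
      using Suc.prems(3) isd jsd m1 by simp
    then have m2: "mset js' = mset (i # r)" by (simp add: add_mset_commute)
    have "length r = m - 1" using lis' jis' by (simp add: r_def length_remove1)
    from jis' lis' obtain m' where m': "m = Suc m'" by (cases m) auto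
    have lr: "length r = m'" using \<open>length r = m - 1\<close> m' by simp
    have e1: "\<And>y. pder m f y is' = pder m f y (j # r)"
      using Suc.IH[of "j # r" is'] Suc.prems lis' lr m' m1 by simp
    have e2: "\<And>y. pder m f y js' = pder m f y (i # r)"
      using Suc.IH[of "i # r" js'] Suc.prems lis' lr m' m2 by simp
    let ?g = "\<lambda>y. pder m' f y r"
    have "dpart i (dpart j ?g) x = dpart j (dpart i ?g) x"
    proof (rule schwarz)
      show "\<And>z. ?g differentiable (at z)" using dif[of m' r] Suc.prems m' lr by simp
      show "\<And>z. dpart j ?g differentiable (at z)" unfolding dpart_pder using dif[of "Suc m'" "j # r"] Suc.prems m' lr by simp
      show "\<And>z. dpart i ?g differentiable (at z)" unfolding dpart_pder using dif[of "Suc m'" "i # r"] Suc.prems m' lr by simp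
      show "continuous_on UNIV (dpart i (dpart j ?g))" unfolding dpart_pder using con[of "Suc (Suc m')" "i # j # r"] Suc.prems m' lr by simp
      show "continuous_on UNIV (dpart j (dpart i ?g))" unfolding dpart_pder using con[of "Suc (Suc m')" "j # i # r"] Suc.prems m' lr by simp
    qed
    then have "pder (Suc m) f x (i # j # r) = pder (Suc m) f x (j # i # r)"
      unfolding dpart_pder m' by (simp add: dpart_def)
    then show ?thesis using isd jsd e1 e2 by (simp add: m')
  qed
qed



lemma invertible_inv: "invertible W \<Longrightarrow> W ** matrix_inv W = mat 1 \<and> matrix_inv W ** W = mat 1"
  unfolding invertible_def matrix_inv_def by (rule someI_ex)

lemma teval_bdd:
  fixes T :: "'n::finite tensor"
  assumes l: "length us = p" and u: "\<forall>u\<in>set us. norm u = 1"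
  shows "\<bar>teval p T us\<bar> \<le> (\<Sum>is\<in>idx p. \<bar>T is\<bar>)"
proof -
  have "\<bar>teval p T us\<bar> \<le> (\<Sum>is\<in>idx p. \<bar>T is * (\<Prod>k<p. (us ! k) $ (is ! k))\<bar>)"
    unfolding teval_def by (rule sum_abs)
  also have "\<dots> \<le> (\<Sum>is\<in>idx p. \<bar>T is\<bar>)"
  proof (rule sum_mono)
    fix "is" :: "'n list"
    have "(\<Prod>k<p. \<bar>(us ! k) $ (is ! k)\<bar>) \<le> 1"
    proof (rule prod_le_1)
      fix k assume "k \<in> {..<p}"
      then have "us ! k \<in> set us" using l by simp
      then have "norm (us ! k) = 1" using u by blast
      then show "0 \<le> \<bar>(us ! k) $ (is ! k)\<bar> \<and> \<bar>(us ! k) $ (is ! k)\<bar> \<le> 1"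
        using component_le_norm_cart[of "us ! k" "is ! k"] by simp
    qed
    then show "\<bar>T is * (\<Prod>k<p. (us ! k) $ (is ! k))\<bar> \<le> \<bar>T is\<bar>"
      by (simp add: abs_mult abs_prod mult_left_le)
  qed
  finally show ?thesis .
qed

definition tS :: "nat \<Rightarrow> 'n::finite tensor \<Rightarrow> real set" where
  "tS p T = {\<bar>teval p T us\<bar> | us. length us = p \<and> (\<forall>u\<in>set us. norm u = 1)}"

lemma tnorm2_tS: "tnorm2 p T = Sup (tS p T)" unfolding tnorm2_def tS_def ..

lemma tS_bdd: "bdd_above (tS p T)"
  unfolding tS_def by (rule bdd_aboveI[where M="\<Sum>is\<in>idx p. \<bar>T is\<bar>"]) (auto intro: teval_bdd)

lemma tS_ne: "tS p (T :: 'n::finite tensor) \<noteq> {}"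
proof -
  let ?us = "replicate p (axis (undefined::'n) (1::real))"
  have "\<bar>teval p T ?us\<bar> \<in> tS p T" unfolding tS_def by auto
  then show ?thesis by blast
qed

lemma tnorm2_upper: "length us = p \<Longrightarrow> (\<forall>u\<in>set us. norm u = 1) \<Longrightarrow> \<bar>teval p T us\<bar> \<le> tnorm2 p T"
  unfolding tnorm2_tS by (rule cSup_upper[OF _ tS_bdd]) (auto simp: tS_def)

lemma tnorm2_nonneg: "0 \<le> tnorm2 p (T :: 'n::finite tensor)"
proof -
  let ?us = "replicate p (axis (undefined::'n) (1::real))"
  have "\<bar>teval p T ?us\<bar> \<le> tnorm2 p T" by (rule tnorm2_upper) auto
  then show ?thesis by linarith
qed

lemma tnorm2_le: "(\<And>us. length us = p \<Longrightarrow> (\<forall>u\<in>set us. norm u = 1) \<Longrightarrow> \<bar>teval p T us\<bar> \<le> c) \<Longrightarrow> tnorm2 p (T :: 'n::finite tensor) \<le> c"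
  unfolding tnorm2_tS by (rule cSup_least[OF tS_ne]) (auto simp: tS_def)

lemma teval_homog:
  fixes T :: "'n::finite tensor"
  assumes l: "length zs = p"
  shows "\<bar>teval p T zs\<bar> \<le> (\<Prod>k<p. norm (zs ! k)) * tnorm2 p T"
proof (cases "\<exists>k<p. zs ! k = 0")
  case True
  then obtain k where k: "k < p" "zs ! k = 0" by blast
  have "teval p T zs = 0" unfolding teval_def
    by (rule sum.neutral) (use k in \<open>auto intro!: prod_zero bexI[of _ k]\<close>)
  then show ?thesis by (simp add: prod_nonneg tnorm2_nonneg)
next
  case False
  define ws where "ws = map (\<lambda>z. (1 / norm z) *\<^sub>R z) zs"
  have lw: "length ws = p" using l by (simp add: ws_def)
  have uw: "\<forall>w\<in>set ws. norm w = 1"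
  proof
    fix w assume "w \<in> set ws"
    then obtain k where "k < p" "w = ws ! k" using lw by (metis in_set_conv_nth)
    then show "norm w = 1" using False l by (simp add: ws_def)
  qed
  have zk: "(zs ! k) $ i = norm (zs ! k) * (ws ! k) $ i" if "k < p" for k i
    using False that l by (simp add: ws_def)
  have "teval p T zs = (\<Prod>k<p. norm (zs ! k)) * teval p T ws"
    unfolding teval_def sum_distrib_left
    by (intro sum.cong refl) (simp add: zk prod.distrib mult_ac)
  then have "\<bar>teval p T zs\<bar> = (\<Prod>k<p. norm (zs ! k)) * \<bar>teval p T ws\<bar>"
    by (simp add: abs_mult prod_nonneg abs_prod)
  also have "\<dots> \<le> (\<Prod>k<p. norm (zs ! k)) * tnorm2 p T"
    by (intro mult_left_mono tnorm2_upper lw uw prod_nonneg) auto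
  finally show ?thesis .
qed

lemma Pm_mult: "Pm v *v w = w - ((v \<bullet> w) / (v \<bullet> v)) *\<^sub>R v"
proof (subst vec_eq_iff, rule allI)
  fix i
  have "(Pm v *v w) $ i = (\<Sum>j\<in>UNIV. - (v $ i * v $ j / (v \<bullet> v)) * w $ j) + (\<Sum>j\<in>UNIV. (if i = j then 1 else 0) * w $ j)"
    unfolding matrix_vector_mult_def Pm_entry sum.distrib[symmetric] by (simp add: algebra_simps)
  also have "(\<Sum>j\<in>UNIV. - (v $ i * v $ j / (v \<bullet> v)) * w $ j) = - (v $ i / (v \<bullet> v)) * (\<Sum>j\<in>UNIV. v $ j * w $ j)"
    by (simp add: sum_distrib_left sum_negf mult.assoc)
  also have "(\<Sum>j\<in>UNIV. (if i = j then 1 else 0) * w $ j) = w $ i"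
  proof -
    have "(\<Sum>j\<in>UNIV. (if i = j then 1 else 0) * w $ j) = (\<Sum>j\<in>UNIV. if i = j then w $ j else 0)"
      by (intro sum.cong) auto
    then show ?thesis by simp
  qed
  finally show "(Pm v *v w) $ i = (w - ((v \<bullet> w) / (v \<bullet> v)) *\<^sub>R v) $ i"
    by (simp add: inner_vec_def algebra_simps)
qed

lemma Pm_norm: "norm (Pm v *v w) \<le> norm w"
proof (cases "v = 0")
  case True then show ?thesis by (simp add: Pm_mult)
next
  case False
  then have vv: "v \<bullet> v > 0" by simp
  let ?c = "(v \<bullet> w) / (v \<bullet> v)"
  have "(norm (Pm v *v w))\<^sup>2 = w \<bullet> w - 2 * ?c * (v \<bullet> w) + ?c * ?c * (v \<bullet> v)"
    unfolding Pm_mult power2_norm_eq_inner by (simp add: inner_diff inner_commute algebra_simps)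
  also have "\<dots> = w \<bullet> w - (v \<bullet> w)\<^sup>2 / (v \<bullet> v)"
    using vv by (simp add: field_simps power2_eq_square)
  also have "\<dots> \<le> (norm w)\<^sup>2" using vv by (simp add: power2_norm_eq_inner)
  finally show ?thesis by (rule power2_le_imp_le) simp
qed

lemma Pm_v: "Pm v *v v = 0"
  by (cases "v = 0") (simp_all add: Pm_mult)

lemma Pm_transpose: "transpose (Pm v) = Pm v"
  by (simp add: vec_eq_iff transpose_def Pm_entry mult.commute)



lemma tfirst_add: "tfirst s (\<lambda>is. X is + Y is) js = tfirst s X js + tfirst s Y js"
  unfolding tfirst_def by (simp add: sum.distrib algebra_simps)

lemma tfirst_diff: "tfirst s (\<lambda>is. X is - Y is) js = tfirst s X js - tfirst s Y js"
  unfolding tfirst_def by (simp add: sum_subtractf algebra_simps)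

lemma tfirst_zero: "tfirst 0 X js = 0"
  unfolding tfirst_def by simp

lemma tmul_zero: "tmul p (\<lambda>is. 0) M js = 0"
  unfolding tmul_def by simp

lemma sym_on_diff: "sym_on p X \<Longrightarrow> sym_on p Y \<Longrightarrow> sym_on p (\<lambda>is. X is - Y is)"
  unfolding sym_on_def by metis

lemma sym_tensor_on: "sym_tensor p X \<Longrightarrow> sym_on p X"
  unfolding sym_tensor_def sym_on_def by blast

lemma avgD_sym:
  assumes "Cp p f" shows "sym_on p (avgD p f x0 s)"
  unfolding sym_on_def avgD_def
proof (intro allI impI)
  fix "is" js :: "'a list" assume l: "length is = p" and m: "mset js = mset is"
  have "pder p f z js = pder p f z is" for z
    by (rule pder_sym[OF assms]) (simp_all only: l m order_refl)
  then show "integral {0..1} (\<lambda>t. pder p f (x0 + t *\<^sub>R s) js) = integral {0..1} (\<lambda>t. pder p f (x0 + t *\<^sub>R s) is)"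
    by simp
qed

lemma onorm_mv: "norm (M *v u) \<le> onorm (\<lambda>x. M *v x) * norm (u :: real^'n::finite)"
  for M :: "real^'n^'n"
  using onorm[OF matrix_vector_mul_bounded_linear[of M]] by simp

lemma onorm_mv_nonneg: "0 \<le> onorm (\<lambda>x. (M::real^'n::finite^'n) *v x)"
  using onorm_pos_le[OF matrix_vector_mul_bounded_linear[of M]] by simp

theorem mainTheorem6:
  fixes p :: nat and f :: "real^'n::finite \<Rightarrow> real"
    and x :: "nat \<Rightarrow> real^'n" and W :: "nat \<Rightarrow> real^'n^'n"
    and C :: "nat \<Rightarrow> 'n tensor" and xstar :: "real^'n"
    and E :: "'n tensor" and k :: nat
  assumes "p \<ge> 2" and "Cp p f"
    and "\<And>j. x (Suc j) - x j \<noteq> 0"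
    and "\<And>j. invertible (W j)"
    and "sym_tensor p (C 0)"
    and "\<And>j. C (Suc j) \<in> feasible p (x (Suc j) - x j) (avgD p f (x j) (x (Suc j) - x j))
             \<and> (\<forall>C' \<in> feasible p (x (Suc j) - x j) (avgD p f (x j) (x (Suc j) - x j)).
                  frob p (tmul p (\<lambda>is. C (Suc j) is - C j is) (W j))
                    \<le> frob p (tmul p (\<lambda>is. C' is - C j is) (W j)))"
    and "\<forall>is. length is = p \<longrightarrow>
           tmul p (\<lambda>is. C (Suc k) is - pder p f xstar is) (W k) is
           = tmul p (tmul p (\<lambda>is. C k is - pder p f xstar is) (W k)) (projP (W k) (x (Suc k) - x k)) is
             + tmul p E (W k) is"
  shows "tnorm2 p E \<le> (1 + kappa2 (W k) ^ p) *
           tnorm2 p (\<lambda>is. avgD p f (x k) (x (Suc k) - x k) is - pder p f xstar is)"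
proof -
  note p2 = assms(1) and Cp = assms(2) and inv = assms(4) and feas = assms(6) and hyp = assms(7)
  obtain q where pq: "p = Suc q" using p2 by (cases p) auto
  define s where "s = x (Suc k) - x k"
  define Wk where "Wk = W k"
  define Wi where "Wi = matrix_inv Wk"
  define v where "v = Wi *v s"
  define P where "P = Pm v"
  define Ct where "Ct = avgD p f (x k) s"
  define Cs where "Cs = pder p f xstar"
  define Ck where "Ck = C k"
  define C1 where "C1 = C (Suc k)"
  have PP: "projP Wk s = P" unfolding projP_def P_def v_def Wi_def Pm_def Let_def ..
  have WW: "Wk ** Wi = mat 1" "Wi ** Wk = mat 1" using invertible_inv[OF inv[of k]] by (simp_all add: Wk_def Wi_def)
  have Wv: "Wk *v v = s" unfolding v_def matrix_vector_mul_assoc WW by simp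
  have symCt: "sym_on p Ct" unfolding Ct_def by (rule avgD_sym[OF Cp])
  have stCk: "sym_tensor p Ck"
  proof (cases k)
    case 0 then show ?thesis using assms(5) by (simp add: Ck_def)
  next
    case (Suc j) then show ?thesis using feas[of j] by (simp add: Ck_def feasible_def)
  qed
  have symCk: "sym_on p Ck" using stCk by (rule sym_tensor_on)
  have feas1: "C1 \<in> feasible p s Ct" using feas[of k] by (simp add: C1_def s_def Ct_def)
  have min1: "\<And>C'. C' \<in> feasible p s Ct \<Longrightarrow> frob p (tmul p (\<lambda>is. C1 is - Ck is) Wk) \<le> frob p (tmul p (\<lambda>is. C' is - Ck is) Wk)"
    using feas[of k] by (simp add: C1_def s_def Ct_def Ck_def Wk_def)
  define R where "R = tmul p (\<lambda>is. Ct is - Ck is) Wk"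
  define A' where "A' = (\<lambda>js. R js - tmul p R P js)"
  define C' where "C' = (\<lambda>is. if length is = p then Ck is + tmul p A' Wi is else 0)"
  have symR: "sym_on p R" unfolding R_def by (rule tmul_sym[OF sym_on_diff[OF symCt symCk]])
  have symA': "sym_on p A'" unfolding A'_def by (rule sym_on_diff[OF symR tmul_sym[OF symR]])
  have stC': "sym_tensor p C'"
    unfolding sym_tensor_def
  proof (intro conjI allI impI)
    fix "is" :: "'n list" assume "length is \<noteq> p" then show "C' is = 0" by (simp add: C'_def)
  next
    fix "is" js :: "'n list" assume l: "length is = p" and m: "mset js = mset is"
    then have lj: "length js = p" using mset_eq_length by fastforce
    have "Ck js = Ck is" using symCk l m unfolding sym_on_def by blast
    moreover have "tmul p A' Wi js = tmul p A' Wi is" using tmul_sym[OF symA'] l m unfolding sym_on_def by blast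
    ultimately show "C' js = C' is" using l lj by (simp add: C'_def)
  qed
  have c3: "tfirst v A' js = tmul q (tfirst s (\<lambda>is. Ct is - Ck is)) Wk js" for js
  proof -
    have "tfirst v (tmul p R P) js = tmul q (tfirst (P *v v) R) P js" by (simp add: pq tfirst_tmul)
    also have "\<dots> = 0" unfolding P_def Pm_v tfirst_zero tmul_zero ..
    finally have z: "tfirst v (tmul p R P) js = 0" .
    have "tfirst v R js = tmul q (tfirst (Wk *v v) (\<lambda>is. Ct is - Ck is)) Wk js"
      unfolding R_def by (simp add: pq tfirst_tmul)
    then show ?thesis unfolding A'_def tfirst_diff z Wv by simp
  qed
  have feasC': "C' \<in> feasible p s Ct"
    unfolding feasible_def
  proof (intro CollectI conjI allI impI stC')
    fix "is" :: "'n list" assume "length is = p - 1"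
    then have l: "length is = q" using pq by simp
    have "tfirst s C' is = tfirst s Ck is + tfirst s (tmul p A' Wi) is"
      unfolding tfirst_def C'_def using l pq by (simp add: sum.distrib algebra_simps)
    also have "tfirst s (tmul p A' Wi) is = tmul q (tfirst v A') Wi is"
      by (simp add: pq tfirst_tmul v_def)
    also have "\<dots> = tmul q (tmul q (tfirst s (\<lambda>is. Ct is - Ck is)) Wk) Wi is"
      using ext[of "tfirst v A'", OF c3] by simp
    also have "\<dots> = tfirst s (\<lambda>is. Ct is - Ck is) is"
      unfolding tmul_comp WW using l by (rule tmul_id)
    also have "\<dots> = tfirst s Ct is - tfirst s Ck is" by (rule tfirst_diff)
    finally show "tfirst s C' is = tfirst s Ct is" by simp
  qed
  define X where "X = tmul p (\<lambda>is. C' is - Ck is) Wk"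
  define Y where "Y = tmul p (\<lambda>is. C1 is - C' is) Wk"
  define Z where "Z = tmul p (\<lambda>is. C1 is - Ck is) Wk"
  have XA: "X js = A' js" if "js \<in> idx p" for js
  proof -
    have "X = tmul p (tmul p A' Wi) Wk"
      unfolding X_def by (rule tmul_cong) (simp add: C'_def idx_def)
    then have "X js = tmul p A' (Wi ** Wk) js" by (simp add: tmul_comp)
    also have "\<dots> = A' js" unfolding WW using that by (simp add: tmul_id idx_def)
    finally show ?thesis .
  qed
  have ZXY: "Z js = X js + Y js" for js
  proof -
    have "Z js = tmul p (\<lambda>is. (C' is - Ck is) + (C1 is - C' is)) Wk js" unfolding Z_def by simp
    then show ?thesis unfolding X_def Y_def tmul_add .
  qed
  have stC1: "sym_tensor p C1" using feas1 by (simp add: feasible_def)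
  have symY: "sym_on p Y" unfolding Y_def
    by (rule tmul_sym[OF sym_on_diff[OF sym_tensor_on[OF stC1] sym_tensor_on[OF stC']]])
  have tfY: "tfirst v Y rest = 0" for rest
  proof -
    have "tfirst v Y rest = tmul q (tfirst s (\<lambda>is. C1 is - C' is)) Wk rest"
      unfolding Y_def by (simp add: pq tfirst_tmul Wv)
    also have "\<dots> = tmul q (\<lambda>is. 0) Wk rest"
    proof (rule arg_cong[where f="\<lambda>T. T rest"], rule tmul_cong)
      fix "is" :: "'n list" assume "is \<in> idx q"
      then have "length is = p - 1" using pq by (simp add: idx_def)
      then show "tfirst s (\<lambda>is. C1 is - C' is) is = 0"
        using feas1 feasC' unfolding tfirst_diff by (simp add: feasible_def)
    qed
    also have "\<dots> = 0" by (rule tmul_zero)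
    finally show ?thesis .
  qed
  have YP: "tmul p Y P js = Y js" if "js \<in> idx p" for js
    unfolding pq P_def by (rule tmulP_fix[OF symY[unfolded pq] tfY]) (use that pq in \<open>simp add: idx_def\<close>)
  have ipXY: "(\<Sum>js\<in>idx p. X js * Y js) = 0"
  proof -
    have "(\<Sum>js\<in>idx p. X js * Y js) = (\<Sum>js\<in>idx p. R js * Y js) - (\<Sum>js\<in>idx p. tmul p R P js * Y js)"
      by (simp add: XA A'_def sum_subtractf algebra_simps)
    also have "(\<Sum>js\<in>idx p. tmul p R P js * Y js) = (\<Sum>is\<in>idx p. R is * tmul p Y (transpose P) is)"
      by (rule tmul_adj)
    also have "\<dots> = (\<Sum>is\<in>idx p. R is * Y is)"
      unfolding P_def Pm_transpose by (intro sum.cong refl) (simp add: YP[unfolded P_def])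
    finally show ?thesis by simp
  qed
  have "frob p Z \<le> frob p X" unfolding Z_def X_def by (rule min1[OF feasC'])
  then have "(\<Sum>js\<in>idx p. (Z js)\<^sup>2) \<le> (\<Sum>js\<in>idx p. (X js)\<^sup>2)"
    unfolding frob_def by (simp add: sum_nonneg)
  moreover have "(\<Sum>js\<in>idx p. (Z js)\<^sup>2) = (\<Sum>js\<in>idx p. (X js)\<^sup>2) + 2 * (\<Sum>js\<in>idx p. X js * Y js) + (\<Sum>js\<in>idx p. (Y js)\<^sup>2)"
    by (simp add: ZXY power2_sum sum.distrib sum_distrib_left algebra_simps)
  ultimately have "(\<Sum>js\<in>idx p. (Y js)\<^sup>2) \<le> 0" using ipXY by simp
  then have "(\<Sum>js\<in>idx p. (Y js)\<^sup>2) = 0" by (simp add: antisym sum_nonneg)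
  then have Y0: "Y js = 0" if "js \<in> idx p" for js
    using sum_nonneg_eq_0_iff[of "idx p" "\<lambda>js. (Y js)\<^sup>2"] that by simp
  have ZA: "Z js = A' js" if "js \<in> idx p" for js using ZXY XA Y0 that by simp
  define D where "D = (\<lambda>is. avgD p f (x k) (x (Suc k) - x k) is - pder p f xstar is)"
  have D': "D = (\<lambda>is. Ct is - Cs is)" unfolding D_def Ct_def Cs_def s_def ..
  define B where "B = tmul p (\<lambda>is. Ck is - Cs is) Wk"
  define G where "G = tmul p D Wk"
  have RGB: "R = (\<lambda>js. G js - B js)"
  proof
    fix js
    have "R js = tmul p (\<lambda>is. (Ct is - Cs is) - (Ck is - Cs is)) Wk js" unfolding R_def by simp
    then show "R js = G js - B js" unfolding tmul_diff G_def B_def D' .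
  qed
  have EW: "tmul p E Wk js = G js - tmul p G P js" if "js \<in> idx p" for js
  proof -
    have l: "length js = p" using that by (simp add: idx_def)
    have h: "tmul p (\<lambda>is. C1 is - Cs is) Wk js = tmul p B P js + tmul p E Wk js"
      using hyp l unfolding C1_def Cs_def B_def Ck_def Wk_def PP[unfolded Wk_def s_def] by simp
    have "tmul p (\<lambda>is. C1 is - Cs is) Wk js = tmul p (\<lambda>is. (C1 is - Ck is) + (Ck is - Cs is)) Wk js" by simp
    then have h2: "tmul p (\<lambda>is. C1 is - Cs is) Wk js = Z js + B js" unfolding tmul_add Z_def B_def .
    have "tmul p R P js = tmul p G P js - tmul p B P js" unfolding RGB tmul_diff ..
    then show ?thesis using h h2 ZA[OF that] RGB unfolding A'_def by (simp add: fun_eq_iff)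
  qed
  define M where "M = Wk ** (P ** Wi)"
  have ED: "E js = D js - tmul p D M js" if "js \<in> idx p" for js
  proof -
    have l: "length js = p" using that by (simp add: idx_def)
    have "E js = tmul p (tmul p E Wk) Wi js" unfolding tmul_comp WW using l by (simp add: tmul_id)
    also have "\<dots> = tmul p (\<lambda>js. G js - tmul p G P js) Wi js"
      by (rule arg_cong[where f="\<lambda>T. T js"], rule tmul_cong, rule EW)
    also have "\<dots> = tmul p G Wi js - tmul p (tmul p G P) Wi js" by (rule tmul_diff)
    also have "\<dots> = D js - tmul p D M js"
      unfolding G_def M_def tmul_comp WW using l by (simp add: tmul_id)
    finally show ?thesis .
  qed
  have kap: "norm (M *v u) \<le> kappa2 (W k) * norm u" for u
  proof -
    have "M *v u = Wk *v (P *v (Wi *v u))" unfolding M_def by (simp add: matrix_vector_mul_assoc)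
    then have "norm (M *v u) \<le> onorm (\<lambda>x. Wk *v x) * norm (P *v (Wi *v u))" using onorm_mv by simp
    also have "\<dots> \<le> onorm (\<lambda>x. Wk *v x) * norm (Wi *v u)"
      by (rule mult_left_mono[OF _ onorm_mv_nonneg]) (simp add: P_def Pm_norm)
    also have "\<dots> \<le> onorm (\<lambda>x. Wk *v x) * (onorm (\<lambda>x. Wi *v x) * norm u)"
      by (rule mult_left_mono[OF onorm_mv onorm_mv_nonneg])
    finally show ?thesis unfolding kappa2_def Wk_def Wi_def by (simp add: mult.assoc)
  qed
  have kpos: "0 \<le> kappa2 (W k)" unfolding kappa2_def by (intro mult_nonneg_nonneg onorm_mv_nonneg)
  show ?thesis unfolding D_def[symmetric]
  proof (rule tnorm2_le)
    fix us :: "(real^'n) list" assume l: "length us = p" and u: "\<forall>u\<in>set us. norm u = 1"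
    have "teval p E us = teval p (\<lambda>js. D js - tmul p D M js) us" by (rule teval_cong) (rule ED)
    also have "\<dots> = teval p D us - teval p D (map (\<lambda>u. M *v u) us)"
      unfolding teval_diff teval_tmul[OF l] ..
    finally have "\<bar>teval p E us\<bar> \<le> \<bar>teval p D us\<bar> + \<bar>teval p D (map (\<lambda>u. M *v u) us)\<bar>" by simp
    also have "\<dots> \<le> tnorm2 p D + (\<Prod>i<p. norm (map (\<lambda>u. M *v u) us ! i)) * tnorm2 p D"
      by (intro add_mono tnorm2_upper l u teval_homog) (simp add: l)
    also have "(\<Prod>i<p. norm (map (\<lambda>u. M *v u) us ! i)) \<le> (\<Prod>i<p. kappa2 (W k))"
    proof (rule prod_mono)
      fix i assume "i \<in> {..<p}"
      then have i: "i < p" by simp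
      then have "norm (us ! i) = 1" using u l by simp
      then show "0 \<le> norm (map (\<lambda>u. M *v u) us ! i) \<and> norm (map (\<lambda>u. M *v u) us ! i) \<le> kappa2 (W k)"
        using kap[of "us ! i"] i l by simp
    qed
    then have "tnorm2 p D + (\<Prod>i<p. norm (map (\<lambda>u. M *v u) us ! i)) * tnorm2 p D \<le> tnorm2 p D + kappa2 (W k) ^ p * tnorm2 p D"
      by (intro add_left_mono mult_right_mono tnorm2_nonneg) simp
    finally show "\<bar>teval p E us\<bar> \<le> (1 + kappa2 (W k) ^ p) * tnorm2 p D" by (simp add: algebra_simps)
  qed
qed


end
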